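(* Let the setting in the context hold, let $\beta_i\in(0,1)$ for each $i\in\mathcal{N}$, and suppose each agent uses the Wasserstein radius $\epsilon_i=\epsilon_i(K_i,\beta_i)$. Let $x_K^*$ be a DRNE of the game $\forall i:\ \min_{x_i\in X_i}\max_{\mathbb{Q}_i\in\mathbb{B}_{\epsilon_i(K_i,\beta_i)}(\hat{\mathbb{P}}_{K_i})}\mathbb{E}_{\mathbb{Q}_i}[h_i(x_i,x_{-i},\xi_i)]$ computed from the drawn multisample $\xi_K=\{\xi_{K_i}\}_{i=1}^N$. Then $$\mathbb{P}^K\Big\{\mathbb{E}_{\mathbb{P}_i}[h_i(x_K^*,\xi_i)]\le\sup_{\mathbb{Q}_i\in\mathbb{B}_{\epsilon_i(K_i,\beta_i)}(\hat{\mathbb{P}}_{K_i})}\mathbb{E}_{\mathbb{Q}_i}[h_i(x_K^*,\xi_i)]\ \ \forall i\in\mathcal{N}\Big\}\ \ge\ 1-\sum_{i\in\mathcal{N}}\beta_i,$$ where $\mathbb{P}^K=\prod_{i=1}^N\mathbb{P}_i^{K_i}$.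
   Context: Agents $i\in\mathcal{N}=\{1,\dots,N\}$ choose $x_i\in X_i\subseteq\mathbb{R}^n$, $X=\prod_iX_i$, $x=\mathrm{col}((x_i)_i)$, $x_{-i}$ the others' decisions; $h_i:\mathbb{R}^{nN}\times\Xi_i\to\mathbb{R}$ is agent $i$'s cost, with uncertainty $\xi_i\in\Xi_i\subseteq\mathbb{R}^p$, $p\neq 2$, distributed according to an unknown true distribution $\mathbb{P}_i$. $\|\cdot\|$ is the Euclidean norm; $\mathcal{M}(\Xi_i)$ is the set of distributions on $\Xi_i$ with finite first moment; $d_W(\mathbb{Q}_1,\mathbb{Q}_2)=\inf_\Pi\int\|\xi_1-\xi_2\|\Pi(d\xi_1,d\xi_2)$ over couplings $\Pi$ of $\mathbb{Q}_1,\mathbb{Q}_2$. Each agent $i$ draws $K_i\ge1$ i.i.d. samples $\xi_{K_i}=\{\xi_i^{(k)}\}_{k=1}^{K_i}$ from $\mathbb{P}_i$ (independently across agents), with empirical distribution $\hat{\mathbb{P}}_{K_i}=\frac1{K_i}\sum_k\delta_{\xi_i^{(k)}}$ and $\mathbb{B}_{\epsilon}(\hat{\mathbb{P}}_{K_i})=\{\mathbb{Q}\in\mathcal{M}(\Xi_i):d_W(\hat{\mathbb{P}}_{K_i},\mathbb{Q})\le\epsilon\}$. A DRNE is $x^*_K\in X$ with $x^*_{i,K}\in\arg\min_{x_i\in X_i}\max_{\mathbb{Q}_i\in\mathbb{B}_{\epsilon_i}(\hat{\mathbb{P}}_{K_i})}\mathbb{E}_{\mathbb{Q}_i}[h_i(x_i,x^*_{-i,K},\xi_i)]$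 for all $i$. Light-tail assumption: for each $i$, the true distribution $\mathbb{P}_i$ (and every distribution considered in agent $i$'s ambiguity set) belongs to $\mathcal{M}(\Xi_i)$ and there is $a_i>1$ with $A_i:=\mathbb{E}[\exp(\|\xi_i\|^{a_i})]<\infty$. Under this assumption there are constants $c_i,b_i>0$ depending only on $a_i,A_i,p$ (Fournier–Guillin) such that $\mathbb{P}_i^{K_i}\{\mathbb{P}_i\in\mathbb{B}_{\epsilon}(\hat{\mathbb{P}}_{K_i})\}\ge 1-c_i\exp(-b_iK_i\epsilon^{\max\{p,2\}})$ if $\epsilon\le1$ and $\ge 1-c_i\exp(-b_iK_i\epsilon^{a_i})$ if $\epsilon>1$. The radius $\epsilon_i(K_i,\beta_i)$ is defined as $\big(\ln(c_i/\beta_i)/(b_iK_i)\big)^{1/\max\{p,2\}}$ if $K_i\ge\ln(c_i/\beta_i)/b_i$ and $\big(\ln(c_i/\beta_i)/(b_iK_i)\big)^{1/a_i}$ otherwise; it satisfies $\mathbb{P}_i^{K_i}\{d_W(\mathbb{P}_i,\hat{\mathbb{P}}_{K_i})\le\epsilon_i(K_i,\beta_i)\}\ge1-\beta_i$. *)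

theory Defs
  imports "HOL-Probability.Probability"
begin

definition distrs :: "'b::euclidean_space set \<Rightarrow> 'b measure set" where
  "distrs Xi = {Q. prob_space Q \<and> sets Q = sets borel \<and> Xi \<in> sets Q \<and> emeasure Q Xi = 1
                  \<and> integrable Q norm}"

definition couplings :: "'b::euclidean_space measure \<Rightarrow> 'b measure \<Rightarrow> ('b \<times> 'b) measure set" where
  "couplings Q1 Q2 = {Pi. sets Pi = sets (borel \<Otimes>\<^sub>M borel)
                          \<and> distr Pi borel fst = Q1 \<and> distr Pi borel snd = Q2}"

definition wdist :: "'b::euclidean_space measure \<Rightarrow> 'b measure \<Rightarrow> ennreal" where
  "wdist Q1 Q2 = (INF Pi\<in>couplings Q1 Q2. \<integral>\<^sup>+ z. ennreal (norm (fst z - snd z)) \<partial>Pi)"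

definition wball :: "'b::euclidean_space set \<Rightarrow> real \<Rightarrow> 'b measure \<Rightarrow> 'b measure set" where
  "wball Xi eps Phat = {Q \<in> distrs Xi. wdist Phat Q \<le> ennreal eps}"

definition empirical :: "nat \<Rightarrow> (nat \<Rightarrow> 'b::euclidean_space) \<Rightarrow> 'b measure" where
  "empirical K s = distr (uniform_count_measure {..<K}) borel s"

definition worst_exp :: "'b::euclidean_space set \<Rightarrow> real \<Rightarrow> 'b measure \<Rightarrow> ('b \<Rightarrow> real) \<Rightarrow> ereal" where
  "worst_exp Xi eps Phat f = (SUP Q\<in>wball Xi eps Phat. ereal (\<integral>\<xi>. f \<xi> \<partial>Q))"

text \<open>The radius eps_i(K_i, beta_i); p is the dimension of the uncertainty.\<close>
definition radius :: "real \<Rightarrow> real \<Rightarrow> nat \<Rightarrow> real \<Rightarrow> nat \<Rightarrow> real \<Rightarrow> real" where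
  "radius c b p a K beta =
     (if real K \<ge> ln (c / beta) / b
      then (ln (c / beta) / (b * real K)) powr (1 / real (max p 2))
      else (ln (c / beta) / (b * real K)) powr (1 / a))"

definition is_DRNE ::
  "nat \<Rightarrow> (nat \<Rightarrow> 'a set) \<Rightarrow> (nat \<Rightarrow> 'b::euclidean_space set) \<Rightarrow> (nat \<Rightarrow> real)
   \<Rightarrow> (nat \<Rightarrow> 'b measure) \<Rightarrow> (nat \<Rightarrow> (nat \<Rightarrow> 'a) \<Rightarrow> 'b \<Rightarrow> real) \<Rightarrow> (nat \<Rightarrow> 'a) \<Rightarrow> bool" where
  "is_DRNE N X Xi eps Phat h x \<longleftrightarrow>
     x \<in> PiE {..<N} X \<and>
     (\<forall>i<N. \<forall>y\<in>X i. worst_exp (Xi i) (eps i) (Phat i) (h i x)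
                     \<le> worst_exp (Xi i) (eps i) (Phat i) (h i (x(i := y))))"

definition multisample :: "nat \<Rightarrow> (nat \<Rightarrow> nat) \<Rightarrow> (nat \<Rightarrow> 'b measure) \<Rightarrow> (nat \<Rightarrow> nat \<Rightarrow> 'b) measure" where
  "multisample N K P = (\<Pi>\<^sub>M i\<in>{..<N}. \<Pi>\<^sub>M k\<in>{..<K i}. P i)"

end

theory Submission
  imports Defs
begin

lemma wball_mono: "e1 \<le> e2 \<Longrightarrow> wball Xi e1 Q \<subseteq> wball Xi e2 Q"
  unfolding wball_def using ennreal_leI order_trans by blast

lemma wball_zero: "wball Xi 0 Q = (\<Inter>j. wball Xi (1 / Suc j) Q)"
proof
  show "wball Xi 0 Q \<subseteq> (\<Inter>j. wball Xi (1 / Suc j) Q)"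
    using wball_mono[of 0 "1 / Suc _" Xi Q] by (simp add: INT_greatest)
  show "(\<Inter>j. wball Xi (1 / Suc j) Q) \<subseteq> wball Xi 0 Q"
  proof
    fix R assume R: "R \<in> (\<Inter>j. wball Xi (1 / Suc j) Q)"
    have "wdist Q R \<le> 0"
    proof (rule ennreal_le_epsilon)
      fix e :: real assume "0 < e"
      then obtain m :: nat where m: "m > 0" "inverse (real m) < e" using ex_inverse_of_nat_less by blast
      define j where "j = m - 1"
      have j: "inverse (real (Suc j)) < e" using m unfolding j_def by simp
      have "wdist Q R \<le> ennreal (1 / Suc j)" using R unfolding wball_def by blast
      also have "\<dots> \<le> ennreal e" using j by (intro ennreal_leI) (simp add: field_simps)
      finally show "wdist Q R \<le> 0 + ennreal e" by simp
    qed
    then show "R \<in> wball Xi 0 Q" using R unfolding wball_def by auto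
  qed
qed

lemma agent_bound:
  fixes P :: "'b::euclidean_space measure" and n :: nat and p :: nat
  defines "M \<equiv> (\<Pi>\<^sub>M k\<in>{..<n}. P)"
  assumes Pp: "prob_space P"
    and FG: "\<forall>\<epsilon>>0. measure M {s \<in> space M. P \<in> wball Xi \<epsilon> (empirical n s)}
          \<ge> 1 - c * exp (- b * real n * (if \<epsilon> \<le> 1 then \<epsilon> powr real (max p 2) else \<epsilon> powr a))"
    and n1: "n \<ge> 1" and cpos: "c > 0" and bpos: "b > 0" and a1: "a > 1" and be: "0 < beta" "beta < 1"
  shows "{s \<in> space M. P \<in> wball Xi (radius c b p a n beta) (empirical n s)} \<in> sets M \<and>
         measure M {s \<in> space M. P \<in> wball Xi (radius c b p a n beta) (empirical n s)} \<ge> 1 - beta"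
proof -
  define G where "G e = {s \<in> space M. P \<in> wball Xi e (empirical n s)}" for e
  interpret M: prob_space M unfolding M_def using Pp by (intro prob_space_PiM) auto
  have meas: "G e \<in> sets M" if "measure M (G e) \<ge> r" "r > 0" for e r
    using that measure_notin_sets[of "G e" M] by force
  have genb: "measure M (G e) \<ge> 1 - c * exp (- b * real n * (if e \<le> 1 then e powr real (max p 2) else e powr a))"
    if "e > 0" for e using FG that unfolding G_def by blast
  have ge1c: "measure M (G e) \<ge> 1 - c" if "e > 0" for e
  proof -
    have "exp (- b * real n * (if e \<le> 1 then e powr real (max p 2) else e powr a)) \<le> 1"
      using bpos by (simp add: mult_nonneg_nonneg)
    then have "c * exp (- b * real n * (if e \<le> 1 then e powr real (max p 2) else e powr a)) \<le> c"
      using cpos by (simp add: mult_left_le)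
    then show ?thesis using genb[OF that] by linarith
  qed
  define r where "r = radius c b p a n beta"
  have r0: "r \<ge> 0" unfolding r_def radius_def by auto
  show ?thesis
  proof (cases "c \<le> beta")
    case True
    show ?thesis
    proof (cases "r > 0")
      case True
      have m1: "measure M (G r) \<ge> 1 - beta" using ge1c[OF True] \<open>c \<le> beta\<close> by linarith
      moreover have "G r \<in> sets M" using meas[OF m1] be by simp
      ultimately show ?thesis unfolding G_def r_def by simp
    next
      case False
      then have r00: "r = 0" using r0 by simp
      have Gs: "range (\<lambda>j. G (1 / Suc j)) \<subseteq> sets M"
      proof (clarsimp)
        fix j :: nat
        have "measure M (G (1 / Suc j)) \<ge> 1 - c" by (rule ge1c) simp
        moreover have "1 - c > 0" using \<open>c \<le> beta\<close> be by simp
        ultimately show "G (1 / (1 + real j)) \<in> sets M" using meas by simp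
      qed
      have dec: "decseq (\<lambda>j. G (1 / Suc j))"
      proof (rule decseq_SucI)
        fix j :: nat
        have "1 / real (Suc (Suc j)) \<le> 1 / real (Suc j)" by (simp add: frac_le)
        then show "G (1 / real (Suc (Suc j))) \<subseteq> G (1 / real (Suc j))"
          unfolding G_def using wball_mono by blast
      qed
      have G0: "G 0 = (\<Inter>j. G (1 / Suc j))"
        unfolding G_def using wball_zero[of Xi "empirical n _"] by auto
      have lim: "(\<lambda>j. measure M (G (1 / Suc j))) \<longlonglongrightarrow> measure M (G 0)"
        unfolding G0 by (rule M.finite_Lim_measure_decseq[OF Gs dec])
      have "1 - c \<le> measure M (G 0)"
        by (rule LIMSEQ_le_const[OF lim]) (use ge1c in auto)
      moreover have "G 0 \<in> sets M" unfolding G0 using Gs by auto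
      ultimately show ?thesis using r00 \<open>c \<le> beta\<close> unfolding G_def r_def[symmetric] by auto
    qed
  next
    case False
    define L where "L = ln (c / beta) / (b * real n)"
    have lnpos: "ln (c / beta) > 0" using False be by simp
    have npos: "real n > 0" using n1 by simp
    have Lpos: "L > 0" unfolding L_def using lnpos bpos npos by simp
    have key: "c * exp (- b * real n * L) = beta"
    proof -
      have "- b * real n * L = - ln (c / beta)" unfolding L_def using bpos npos by simp
      then have "exp (- b * real n * L) = exp (ln beta) / exp (ln c)" using cpos be
        by (simp add: ln_div exp_diff)
      then have "exp (- b * real n * L) = beta / c" using cpos be by simp
      then show ?thesis using cpos by simp
    qed
    obtain e where e: "e > 0" "r = e" "(if e \<le> 1 then e powr real (max p 2) else e powr a) = L"
    proof (cases "real n \<ge> ln (c / beta) / b")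
      case True
      have L1: "L \<le> 1" unfolding L_def using True bpos npos lnpos
        by (simp add: field_simps)
      define e where "e = L powr (1 / real (max p 2))"
      have rr: "r = e" unfolding r_def radius_def e_def L_def using True by simp
      have ep: "e > 0" unfolding e_def using Lpos by simp
      have "e \<le> 1" unfolding e_def using L1 Lpos by (simp add: powr_le1)
      moreover have "e powr real (max p 2) = L" unfolding e_def powr_powr using Lpos by simp
      ultimately show ?thesis using that ep rr by simp
    next
      case nT: False
      have L1: "L > 1" unfolding L_def using nT bpos npos lnpos
        by (simp add: field_simps)
      define e where "e = L powr (1 / a)"
      have rr: "r = e" unfolding r_def radius_def e_def L_def using nT by simp
      have ep: "e > 0" unfolding e_def using Lpos by simp
      have "e > 1" unfolding e_def using L1 a1 powr_less_mono2[of "1/a" 1 L] by simp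
      moreover have "e powr a = L" unfolding e_def powr_powr using Lpos a1 by simp
      ultimately show ?thesis using that ep rr by simp
    qed
    have "measure M (G r) \<ge> 1 - beta" using genb[OF e(1)] e key by simp
    moreover then have "G r \<in> sets M" using meas be by simp
    ultimately show ?thesis unfolding G_def r_def by simp
  qed
qed
theorem lemma4:
  fixes N :: nat
    and X :: "nat \<Rightarrow> 'a::euclidean_space set"
    and Xi :: "nat \<Rightarrow> 'b::euclidean_space set"
    and P :: "nat \<Rightarrow> 'b measure"
    and h :: "nat \<Rightarrow> (nat \<Rightarrow> 'a) \<Rightarrow> 'b \<Rightarrow> real"
    and K :: "nat \<Rightarrow> nat"
    and beta a c b :: "nat \<Rightarrow> real"
    and A :: "nat \<Rightarrow> real"
    and xstar :: "(nat \<Rightarrow> nat \<Rightarrow> 'b) \<Rightarrow> nat \<Rightarrow> 'a"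
  assumes p_ne_2: "DIM('b) \<noteq> 2"
    and Xi_borel: "\<forall>i<N. Xi i \<in> sets borel"
    and P_distr: "\<forall>i<N. P i \<in> distrs (Xi i)"
    and h_meas: "\<forall>i<N. \<forall>x. h i x \<in> borel_measurable borel"
    and light_tail: "\<forall>i<N. a i > 1 \<and>
          (\<integral>\<^sup>+ \<xi>. ennreal (exp (norm \<xi> powr a i)) \<partial>P i) = ennreal (A i)"
    and const_pos: "\<forall>i<N. c i > 0 \<and> b i > 0"
    and fournier_guillin: "\<forall>i<N. \<forall>n::nat. n \<ge> 1 \<longrightarrow> (\<forall>\<epsilon>>0.
          measure (\<Pi>\<^sub>M k\<in>{..<n}. P i)
            {s \<in> space (\<Pi>\<^sub>M k\<in>{..<n}. P i). P i \<in> wball (Xi i) \<epsilon> (empirical n s)}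
          \<ge> 1 - c i * exp (- b i * real n *
                (if \<epsilon> \<le> 1 then \<epsilon> powr real (max DIM('b) 2) else \<epsilon> powr a i)))"
    and K_pos: "\<forall>i<N. K i \<ge> 1"
    and beta_range: "\<forall>i<N. 0 < beta i \<and> beta i < 1"
    and DRNE: "\<forall>s\<in>space (multisample N K P).
          is_DRNE N X Xi (\<lambda>i. radius (c i) (b i) DIM('b) (a i) (K i) (beta i))
                  (\<lambda>i. empirical (K i) (s i)) h (xstar s)"
    and event_meas: "{s \<in> space (multisample N K P). \<forall>i<N.
          ereal (\<integral>\<xi>. h i (xstar s) \<xi> \<partial>P i)
          \<le> worst_exp (Xi i) (radius (c i) (b i) DIM('b) (a i) (K i) (beta i))
                       (empirical (K i) (s i)) (h i (xstar s))} \<in> sets (multisample N K P)"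
  shows "measure (multisample N K P)
           {s \<in> space (multisample N K P). \<forall>i<N.
              ereal (\<integral>\<xi>. h i (xstar s) \<xi> \<partial>P i)
              \<le> worst_exp (Xi i) (radius (c i) (b i) DIM('b) (a i) (K i) (beta i))
                           (empirical (K i) (s i)) (h i (xstar s))}
         \<ge> 1 - (\<Sum>i<N. beta i)"
proof -
  define MS where "MS = multisample N K P"
  define r where "r i = radius (c i) (b i) DIM('b) (a i) (K i) (beta i)" for i
  define Mi where "Mi i = (\<Pi>\<^sub>M k\<in>{..<K i}. P i)" for i
  define G where "G i = {t \<in> space (Mi i). P i \<in> wball (Xi i) (r i) (empirical (K i) t)}" for i
  define H where "H i = (\<lambda>s. s i) -` G i \<inter> space MS" for i
  define E where "E = {s \<in> space MS. \<forall>i<N.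
          ereal (\<integral>\<xi>. h i (xstar s) \<xi> \<partial>P i)
          \<le> worst_exp (Xi i) (r i) (empirical (K i) (s i)) (h i (xstar s))}"
  have Pp: "prob_space (P i)" if "i < N" for i using P_distr that unfolding distrs_def by blast
  have Mip: "prob_space (Mi i)" if "i < N" for i
    unfolding Mi_def using Pp[OF that] by (intro prob_space_PiM) auto
  have MSdef: "MS = (\<Pi>\<^sub>M i\<in>{..<N}. Mi i)" unfolding MS_def multisample_def Mi_def by simp
  interpret MS: prob_space MS unfolding MSdef using Mip by (intro prob_space_PiM) auto
  have Gi: "G i \<in> sets (Mi i) \<and> measure (Mi i) (G i) \<ge> 1 - beta i" if "i < N" for i
    unfolding G_def Mi_def r_def
  proof (rule agent_bound[where p="DIM('b)"])
    show "prob_space (P i)" using Pp[OF that] .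
    show "\<forall>\<epsilon>>0. measure (\<Pi>\<^sub>M k\<in>{..<K i}. P i) {s \<in> space (\<Pi>\<^sub>M k\<in>{..<K i}. P i). P i \<in> wball (Xi i) \<epsilon> (empirical (K i) s)}
          \<ge> 1 - c i * exp (- b i * real (K i) * (if \<epsilon> \<le> 1 then \<epsilon> powr real (max DIM('b) 2) else \<epsilon> powr a i))"
      using fournier_guillin that K_pos by blast
    show "K i \<ge> 1" using K_pos that by blast
    show "c i > 0" "b i > 0" using const_pos that by auto
    show "a i > 1" using light_tail that by blast
    show "0 < beta i" "beta i < 1" using beta_range that by auto
  qed
  have comp: "(\<lambda>s. s i) \<in> measurable MS (Mi i)" if "i < N" for i
    unfolding MSdef using that by (intro measurable_component_singleton) auto
  have Hs: "H i \<in> sets MS" if "i < N" for i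
    unfolding H_def using measurable_sets[OF comp[OF that]] Gi[OF that] by blast
  have Hm: "measure MS (H i) \<ge> 1 - beta i" if "i < N" for i
  proof -
    have "measure MS (H i) = measure (distr MS (Mi i) (\<lambda>s. s i)) (G i)"
      unfolding H_def using comp[OF that] Gi[OF that] by (simp add: measure_distr)
    also have "distr MS (Mi i) (\<lambda>s. s i) = Mi i"
      unfolding MSdef using Mip that by (intro distr_PiM_component) auto
    finally show ?thesis using Gi[OF that] by simp
  qed
  have sub: "space MS - E \<subseteq> (\<Union>i\<in>{..<N}. space MS - H i)"
  proof
    fix s assume s: "s \<in> space MS - E"
    show "s \<in> (\<Union>i\<in>{..<N}. space MS - H i)"
    proof (rule ccontr)
      assume "s \<notin> (\<Union>i\<in>{..<N}. space MS - H i)"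
      then have hs: "\<forall>i<N. s \<in> H i" using s by auto
      have "\<forall>i<N. ereal (\<integral>\<xi>. h i (xstar s) \<xi> \<partial>P i)
          \<le> worst_exp (Xi i) (r i) (empirical (K i) (s i)) (h i (xstar s))"
      proof (intro allI impI)
        fix i assume "i < N"
        then have "P i \<in> wball (Xi i) (r i) (empirical (K i) (s i))"
          using hs unfolding H_def G_def by auto
        then show "ereal (\<integral>\<xi>. h i (xstar s) \<xi> \<partial>P i)
          \<le> worst_exp (Xi i) (r i) (empirical (K i) (s i)) (h i (xstar s))"
          unfolding worst_exp_def by (rule SUP_upper[where f="\<lambda>Q. ereal (\<integral>\<xi>. h i (xstar s) \<xi> \<partial>Q)"])
      qed
      moreover have "s \<in> space MS" using s by blast
      ultimately have "s \<in> E" unfolding E_def by (simp only: mem_Collect_eq)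
      then show False using s by blast
    qed
  qed
  have Es: "E \<in> sets MS" using event_meas unfolding E_def MS_def r_def .
  have "measure MS (space MS - E) \<le> measure MS (\<Union>i\<in>{..<N}. space MS - H i)"
  proof (rule MS.finite_measure_mono[OF sub])
    show "(\<Union>i\<in>{..<N}. space MS - H i) \<in> sets MS"
      using Hs by (intro sets.finite_UN) auto
  qed
  also have "\<dots> \<le> (\<Sum>i<N. measure MS (space MS - H i))"
    using Hs by (intro MS.finite_measure_subadditive_finite) blast+
  also have "\<dots> \<le> (\<Sum>i<N. beta i)"
  proof (rule sum_mono)
    fix i assume "i \<in> {..<N}"
    then show "measure MS (space MS - H i) \<le> beta i"
    proof -
      have "i < N" using \<open>i \<in> {..<N}\<close> by simp
      from MS.prob_compl[OF Hs[OF this]] Hm[OF this] show ?thesis by simp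
    qed
  qed
  finally have "measure MS E \<ge> 1 - (\<Sum>i<N. beta i)"
    using MS.prob_compl[OF Es] by simp
  then show ?thesis unfolding E_def MS_def r_def .
qed

end
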